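(* Let $G$ be a graph of order $n\ge 3$ with no isolated vertices and $b_{tR}(G)<\infty$, and suppose $\gamma_{tR}(G)=4$ (equivalently, $\Delta(G)\le n-2$ and there exist adjacent $u,v$ with $N[u]\cup N[v]=V(G)$). Then $b_{tR}(G)=b_t(G)$.
   Context: A TRDF on $G=(V,E)$ is a function $f:V\to\{0,1,2\}$ such that every $v$ with $f(v)=0$ has a neighbor $u$ with $f(u)=2$ and the subgraph induced by $\{v:f(v)>0\}$ has no isolated vertices; $\gamma_{tR}(G)$ is its minimum weight. $b_{tR}(G)$ is the minimum $|E'|$ such that $G-E'$ has no isolated vertices and $\gamma_{tR}(G-E')>\gamma_{tR}(G)$ ($\infty$ if none). $\gamma_t$ is the total domination number, and the total bondage number $b_t(G)$ is the minimum $|E'|$ such that $G-E'$ has no isolated vertices and $\gamma_t(G-E')>\gamma_t(G)$. *)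

theory Defs
  imports Main "HOL-Library.Extended_Nat"
begin

definition graph :: "'a set \<Rightarrow> 'a set set \<Rightarrow> bool" where
  "graph V E \<longleftrightarrow> finite V \<and> (\<forall>e\<in>E. e \<subseteq> V \<and> card e = 2)"

definition adj :: "'a set set \<Rightarrow> 'a \<Rightarrow> 'a \<Rightarrow> bool" where
  "adj E u v \<longleftrightarrow> {u, v} \<in> E"

definition no_isolated :: "'a set \<Rightarrow> 'a set set \<Rightarrow> bool" where
  "no_isolated V E \<longleftrightarrow> (\<forall>v\<in>V. \<exists>u\<in>V. adj E v u)"

definition trdf :: "'a set \<Rightarrow> 'a set set \<Rightarrow> ('a \<Rightarrow> nat) \<Rightarrow> bool" where
  "trdf V E f \<longleftrightarrow>
     (\<forall>v\<in>V. f v \<in> {0, 1, 2}) \<and>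
     (\<forall>v\<in>V. f v = 0 \<longrightarrow> (\<exists>u\<in>V. adj E v u \<and> f u = 2)) \<and>
     (\<forall>v\<in>V. f v > 0 \<longrightarrow> (\<exists>u\<in>V. adj E v u \<and> f u > 0))"

definition weight :: "'a set \<Rightarrow> ('a \<Rightarrow> nat) \<Rightarrow> nat" where
  "weight V f = (\<Sum>v\<in>V. f v)"

definition gamma_tR :: "'a set \<Rightarrow> 'a set set \<Rightarrow> nat" where
  "gamma_tR V E = (LEAST w. \<exists>f. trdf V E f \<and> weight V f = w)"

definition total_dom_set :: "'a set \<Rightarrow> 'a set set \<Rightarrow> 'a set \<Rightarrow> bool" where
  "total_dom_set V E S \<longleftrightarrow> S \<subseteq> V \<and> (\<forall>v\<in>V. \<exists>u\<in>S. adj E v u)"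

definition gamma_t :: "'a set \<Rightarrow> 'a set set \<Rightarrow> nat" where
  "gamma_t V E = (LEAST k. \<exists>S. total_dom_set V E S \<and> card S = k)"

text \<open>Bondage numbers; the infimum of the empty set of extended naturals is \<infinity>.\<close>
definition b_tR :: "'a set \<Rightarrow> 'a set set \<Rightarrow> enat" where
  "b_tR V E = Inf {enat (card E') | E'. E' \<subseteq> E \<and> no_isolated V (E - E') \<and>
                    gamma_tR V (E - E') > gamma_tR V E}"

definition b_t :: "'a set \<Rightarrow> 'a set set \<Rightarrow> enat" where
  "b_t V E = Inf {enat (card E') | E'. E' \<subseteq> E \<and> no_isolated V (E - E') \<and>
                    gamma_t V (E - E') > gamma_t V E}"

end

theory Submission
  imports Defs
begin

lemma adj_sym: "adj E u v = adj E v u"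
  unfolding adj_def by (simp add: insert_commute)

lemma no_loop: "graph V E \<Longrightarrow> \<not> adj E v v"
  unfolding graph_def adj_def by fastforce

lemma graph_sub: "graph V E \<Longrightarrow> graph V (E - F)"
  unfolding graph_def by auto

lemma ones_trdf: "no_isolated V E \<Longrightarrow> trdf V E (\<lambda>_. 1)"
  unfolding trdf_def no_isolated_def by auto

lemma gtR_ex: "no_isolated V E \<Longrightarrow> \<exists>f. trdf V E f \<and> weight V f = gamma_tR V E"
  unfolding gamma_tR_def
  by (rule LeastI_ex) (use ones_trdf in blast)

lemma gtR_le_card: "no_isolated V E \<Longrightarrow> gamma_tR V E \<le> card V"
proof -
  assume a: "no_isolated V E"
  have "weight V (\<lambda>_. 1) = card V" by (simp add: weight_def)
  then show ?thesis unfolding gamma_tR_def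
    by (metis (mono_tags, lifting) Least_le a ones_trdf)
qed

lemma gt_ex: "no_isolated V E \<Longrightarrow> \<exists>S. total_dom_set V E S \<and> card S = gamma_t V E"
  unfolding gamma_t_def
  by (rule LeastI_ex) (auto simp: total_dom_set_def no_isolated_def)

lemma tds_card: assumes "graph V E" "V \<noteq> {}" "total_dom_set V E S" shows "card S \<ge> 2"
proof -
  have fin: "finite S" using assms unfolding graph_def total_dom_set_def by (meson finite_subset)
  obtain v where "v \<in> V" using assms(2) by blast
  then obtain u where u: "u \<in> S" "adj E v u" using assms(3) unfolding total_dom_set_def by blast
  then have "u \<in> V" using assms(3) unfolding total_dom_set_def by blast
  then obtain w where w: "w \<in> S" "adj E u w" using assms(3) unfolding total_dom_set_def by blast
  have "w \<noteq> u" using w no_loop[OF assms(1)] by blast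
  then have "card {u, w} = 2" by simp
  moreover have "card {u,w} \<le> card S" using u w fin by (intro card_mono) auto
  ultimately show ?thesis by simp
qed

lemma sum_sub_le: "finite V \<Longrightarrow> A \<subseteq> V \<Longrightarrow> (\<Sum>x\<in>A. (f x::nat)) \<le> (\<Sum>x\<in>V. f x)"
  by (rule sum_mono2) auto

lemma sum3: "w \<notin> {a,b} \<Longrightarrow> a \<noteq> (b::'a) \<Longrightarrow> (\<Sum>x\<in>{a,b,w}. (f x::nat)) = f a + f b + f w"
  by (auto simp: ac_simps)

lemma sum4: "w \<notin> {a,b} \<Longrightarrow> a \<noteq> (b::'a) \<Longrightarrow> \<not>(v = a \<or> v = b) \<Longrightarrow> w \<noteq> v \<Longrightarrow> (\<Sum>x\<in>{a,b,w,v}. (f x::nat)) = f a + f b + f w + f v"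
  by (auto simp: ac_simps)

lemma key1:
  assumes g: "graph V E" and ni: "no_isolated V E" and c5: "card V \<ge> 5"
    and le: "gamma_tR V E \<le> 4"
  shows "gamma_t V E \<le> 2"
proof -
  have finV: "finite V" using g unfolding graph_def by blast
  obtain f where tf: "trdf V E f" and wf: "weight V f \<le> 4" using gtR_ex[OF ni] le by auto
  have vals: "\<forall>v\<in>V. f v \<in> {0,1,2}"
    and z: "\<forall>v\<in>V. f v = 0 \<longrightarrow> (\<exists>u\<in>V. adj E v u \<and> f u = 2)"
    and p: "\<forall>v\<in>V. f v > 0 \<longrightarrow> (\<exists>u\<in>V. adj E v u \<and> f u > 0)"
    using tf unfolding trdf_def by auto
  have W: "(\<Sum>x\<in>V. f x) \<le> 4" using wf unfolding weight_def .
  have "\<exists>a\<in>V. f a = 2"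
  proof (rule ccontr)
    assume "\<not> ?thesis"
    then have "\<forall>v\<in>V. f v = 1" using vals z by fastforce
    then have "(\<Sum>x\<in>V. f x) = card V" by simp
    then show False using W c5 by simp
  qed
  then obtain a where a: "a \<in> V" "f a = 2" by blast
  then obtain b where b: "b \<in> V" "adj E a b" "f b > 0" using p by force
  have ab: "a \<noteq> b" using b no_loop[OF g] by blast
  have tds: "total_dom_set V E {a, b}"
    unfolding total_dom_set_def
  proof (intro conjI ballI)
    show "{a, b} \<subseteq> V" using a b by blast
  next
    fix v assume v: "v \<in> V"
    show "\<exists>u\<in>{a, b}. adj E v u"
    proof (cases "f v = 0")
      case True
      then obtain w where w: "w \<in> V" "adj E v w" "f w = 2" using z v by blast
      show ?thesis
      proof (rule ccontr)
        assume "\<not> ?thesis"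
        then have "w \<notin> {a,b}" using w by blast
        then have "(\<Sum>x\<in>{a,b,w}. f x) = f a + f b + f w" using ab by (rule sum3)
        moreover have "(\<Sum>x\<in>{a,b,w}. f x) \<le> (\<Sum>x\<in>V. f x)"
          using a b w finV by (intro sum_sub_le) auto
        ultimately show False using W a(2) b(3) w(3) by linarith
      qed
    next
      case False
      show ?thesis
      proof (cases "v = a \<or> v = b")
        case True
        then show ?thesis using b(2) adj_sym[of E a b] by auto
      next
        case nv: False
        have fv: "f v > 0" using False by simp
        obtain w where w: "w \<in> V" "adj E v w" "f w > 0" using p v fv by blast
        have wv: "w \<noteq> v" using w no_loop[OF g] by blast
        show ?thesis
        proof (rule ccontr)
          assume "\<not> ?thesis"
          then have "w \<notin> {a,b}" using w by blast
          then have "(\<Sum>x\<in>{a,b,w,v}. f x) = f a + f b + f w + f v" using ab nv wv by (intro sum4)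
          moreover have "(\<Sum>x\<in>{a,b,w,v}. f x) \<le> (\<Sum>x\<in>V. f x)"
            using a b w v finV by (intro sum_sub_le) auto
          ultimately show False using W a(2) b(3) w(3) fv by linarith
        qed
      qed
    qed
  qed
  have "card {a,b} = 2" using ab by simp
  then show ?thesis unfolding gamma_t_def using tds
    by (metis (mono_tags, lifting) Least_le)
qed

lemma key2:
  assumes g: "graph V E" and ni: "no_isolated V E" and ne: "V \<noteq> {}"
    and le: "gamma_t V E \<le> 2"
  shows "gamma_tR V E \<le> 4"
proof -
  have finV: "finite V" using g unfolding graph_def by blast
  obtain S where S: "total_dom_set V E S" "card S \<le> 2" using gt_ex[OF ni] le by auto
  have cS: "card S = 2" using tds_card[OF g ne S(1)] S(2) by simp
  have SV: "S \<subseteq> V" using S unfolding total_dom_set_def by blast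
  define f where "f = (\<lambda>x. if x \<in> S then 2 else (0::nat))"
  have "trdf V E f"
    unfolding trdf_def f_def using S(1) SV unfolding total_dom_set_def by auto
  moreover have "weight V f = 4"
  proof -
    have "weight V f = (\<Sum>x\<in>V \<inter> {x. x \<in> S}. 2)"
      unfolding weight_def f_def by (simp add: sum.If_cases finV)
    also have "V \<inter> {x. x \<in> S} = S" using SV by blast
    finally show ?thesis using cS by simp
  qed
  ultimately show ?thesis unfolding gamma_tR_def
    by (metis (mono_tags, lifting) Least_le)
qed

theorem mainTheorem6:
  fixes V :: "'a set" and E :: "'a set set"
  assumes "graph V E"
    and "card V \<ge> 3"
    and "no_isolated V E"
    and "b_tR V E < \<infinity>"
    and "gamma_tR V E = 4"
  shows "b_tR V E = b_t V E"
proof -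
  let ?A = "{enat (card E') | E'. E' \<subseteq> E \<and> no_isolated V (E - E') \<and>
                    gamma_tR V (E - E') > gamma_tR V E}"
  have "?A \<noteq> {}"
  proof
    assume "?A = {}"
    moreover have "b_tR V E = Inf ?A" unfolding b_tR_def by simp
    ultimately have "b_tR V E = Inf ({}::enat set)" by (simp only:)
    also have "Inf ({}::enat set) = \<infinity>" by (simp add: top_enat_def)
    finally have "b_tR V E = \<infinity>" .
    then show False using assms(4) by simp
  qed
  then obtain F where F: "no_isolated V (E - F)" "gamma_tR V (E - F) > 4"
    using assms(5) by auto
  have c5: "card V \<ge> 5" using gtR_le_card[OF F(1)] F(2) by simp
  have ne: "V \<noteq> {}" using c5 by auto
  have gt2: "gamma_t V E = 2"
  proof -
    have "gamma_t V E \<le> 2" using key1[OF assms(1) assms(3) c5] assms(5) by simp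
    moreover obtain S where "total_dom_set V E S" "card S = gamma_t V E"
      using gt_ex[OF assms(3)] by blast
    then have "gamma_t V E \<ge> 2" using tds_card[OF assms(1) ne] by metis
    ultimately show ?thesis by simp
  qed
  have eqv: "gamma_tR V (E - F') > 4 \<longleftrightarrow> gamma_t V (E - F') > 2"
    if "no_isolated V (E - F')" for F'
    using key1[OF graph_sub[OF assms(1)] that c5] key2[OF graph_sub[OF assms(1)] that ne]
    by linarith
  have seq: "{enat (card E') | E'. E' \<subseteq> E \<and> no_isolated V (E - E') \<and> 4 < gamma_tR V (E - E')}
    = {enat (card E') | E'. E' \<subseteq> E \<and> no_isolated V (E - E') \<and> 2 < gamma_t V (E - E')}"
    using eqv by auto
  show ?thesis
    unfolding b_tR_def b_t_def assms(5) gt2 seq ..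
qed

end
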